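(* The addition operation on $\mathbb{Q}$ is not definable in the structure $\langle\mathbb{Q};<,\times\rangle$; that is, there is no first-order formula $\varphi(x,y,z)$ in the language $\{<,\times\}$ such that for all rationals $a,b,c$, $\langle\mathbb{Q};<,\times\rangle\models\varphi(a,b,c)$ iff $c=a+b$. *)

theory Defs
  imports Complex_Main
begin

datatype tm = Var nat | Mul tm tm

datatype fm =
    FTrue
  | FFalse
  | Eq tm tm
  | Less tm tm
  | Not fm
  | And fm fm
  | Or fm fm
  | Imp fm fm
  | Ex nat fm
  | All nat fm

fun tval :: "(nat \<Rightarrow> rat) \<Rightarrow> tm \<Rightarrow> rat" where
  "tval e (Var i) = e i"
| "tval e (Mul s t) = tval e s * tval e t"

fun sat :: "(nat \<Rightarrow> rat) \<Rightarrow> fm \<Rightarrow> bool" where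
  "sat e FTrue = True"
| "sat e FFalse = False"
| "sat e (Eq s t) = (tval e s = tval e t)"
| "sat e (Less s t) = (tval e s < tval e t)"
| "sat e (Not p) = (\<not> sat e p)"
| "sat e (And p q) = (sat e p \<and> sat e q)"
| "sat e (Or p q) = (sat e p \<or> sat e q)"
| "sat e (Imp p q) = (sat e p \<longrightarrow> sat e q)"
| "sat e (Ex x p) = (\<exists>a. sat (e(x := a)) p)"
| "sat e (All x p) = (\<forall>a. sat (e(x := a)) p)"

fun ftm :: "tm \<Rightarrow> nat set" where
  "ftm (Var i) = {i}"
| "ftm (Mul s t) = ftm s \<union> ftm t"

fun fv :: "fm \<Rightarrow> nat set" where
  "fv FTrue = {}"
| "fv FFalse = {}"
| "fv (Eq s t) = ftm s \<union> ftm t"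
| "fv (Less s t) = ftm s \<union> ftm t"
| "fv (Not p) = fv p"
| "fv (And p q) = fv p \<union> fv q"
| "fv (Or p q) = fv p \<union> fv q"
| "fv (Imp p q) = fv p \<union> fv q"
| "fv (Ex x p) = fv p - {x}"
| "fv (All x p) = fv p - {x}"

end

theory Submission
  imports Defs "HOL-Library.FuncSet"
begin


definition lr :: "rat \<Rightarrow> real" where "lr x = ln (real_of_rat \<bar>x\<bar>)"

definition LL :: "(nat \<Rightarrow> rat) \<Rightarrow> nat set \<Rightarrow> (nat \<Rightarrow> int) \<Rightarrow> real" where
  "LL e V c = (\<Sum>i\<in>V. real_of_int (c i) * lr (e i))"

definition nrm :: "nat set \<Rightarrow> (nat \<Rightarrow> int) \<Rightarrow> int" where
  "nrm V c = (\<Sum>i\<in>V. \<bar>c i\<bar>)"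

definition Inv :: "nat \<Rightarrow> nat \<Rightarrow> nat set \<Rightarrow> (nat \<Rightarrow> rat) \<Rightarrow> (nat \<Rightarrow> rat) \<Rightarrow> bool" where
 "Inv N M V e e' \<longleftrightarrow> finite V \<and> 0 < M \<and>
   (\<forall>i\<in>V. (e i = 0 \<longleftrightarrow> e' i = 0) \<and> (0 < e i \<longleftrightarrow> 0 < e' i)) \<and>
   (\<forall>c. nrm V c \<le> int N \<longrightarrow> sgn (LL e V c) = sgn (LL e' V c)) \<and>
   (\<forall>i\<in>V. e i \<noteq> 0 \<longrightarrow> (\<exists>u::rat. 0 < u \<and> \<bar>e' i\<bar> = \<bar>e i\<bar> * u ^ M))"

lemma lr_mult: "x \<noteq> 0 \<Longrightarrow> y \<noteq> 0 \<Longrightarrow> lr (x*y) = lr x + lr y"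
  by (simp add: lr_def abs_mult of_rat_mult ln_mult)

lemma lr_zero[simp]: "lr 0 = 0" by (simp add: lr_def)

lemma lr_less: "x \<noteq> 0 \<Longrightarrow> y \<noteq> 0 \<Longrightarrow> lr x < lr y \<longleftrightarrow> \<bar>x\<bar> < \<bar>y\<bar>"
  by (simp add: lr_def of_rat_less)

lemma LL_add: "LL e V (\<lambda>i. c i + d i) = LL e V c + LL e V d"
  by (simp add: LL_def sum.distrib algebra_simps)

lemma LL_lin: "LL e V (\<lambda>i. a * c i - b * d i) = of_int a * LL e V c - of_int b * LL e V d"
  by (simp add: LL_def sum_subtractf sum_distrib_left algebra_simps)

lemma LL_neg: "LL e V (\<lambda>i. - c i) = - LL e V c"
  by (simp add: LL_def sum_negf)

lemma nrm_nonneg: "0 \<le> nrm V c" by (simp add: nrm_def sum_nonneg)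

lemma nrm_neg: "nrm V (\<lambda>i. - c i) = nrm V c" by (simp add: nrm_def)

lemma nrm_lin: "nrm V (\<lambda>i. a * c i - b * d i) \<le> \<bar>a\<bar> * nrm V c + \<bar>b\<bar> * nrm V d"
proof -
  have "nrm V (\<lambda>i. a * c i - b * d i) \<le> (\<Sum>i\<in>V. \<bar>a\<bar> * \<bar>c i\<bar> + \<bar>b\<bar> * \<bar>d i\<bar>)"
    unfolding nrm_def by (rule sum_mono) (simp add: abs_mult[symmetric] abs_triangle_ineq4)
  also have "\<dots> = \<bar>a\<bar> * nrm V c + \<bar>b\<bar> * nrm V d"
    by (simp add: nrm_def sum.distrib sum_distrib_left)
  finally show ?thesis .
qed

lemma nrm_le: "finite V \<Longrightarrow> i \<in> V \<Longrightarrow> \<bar>c i\<bar> \<le> nrm V c"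
  unfolding nrm_def by (rule member_le_sum) auto

fun ex :: "tm \<Rightarrow> nat \<Rightarrow> nat" where
  "ex (Var i) = (\<lambda>j. if j = i then 1 else 0)"
| "ex (Mul s t) = (\<lambda>j. ex s j + ex t j)"

fun deg :: "tm \<Rightarrow> nat" where
  "deg (Var i) = 1"
| "deg (Mul s t) = deg s + deg t"

lemma tval_zero: "tval e t = 0 \<longleftrightarrow> (\<exists>i\<in>ftm t. e i = 0)"
  by (induction t) auto

lemma tval_sgn: "(\<forall>i\<in>ftm t. sgn (e i) = sgn (e' i)) \<Longrightarrow> sgn (tval e t) = sgn (tval e' t)"
  by (induction t) (auto simp: sgn_mult)

lemma tval_lr: "finite V \<Longrightarrow> ftm t \<subseteq> V \<Longrightarrow> tval e t \<noteq> 0 \<Longrightarrow>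
   lr (tval e t) = LL e V (\<lambda>i. int (ex t i))"
proof (induction t)
  case (Var i)
  have "(\<Sum>j\<in>V. real (if j = i then 1 else 0) * lr (e j)) = (\<Sum>j\<in>V. if j = i then lr (e j) else 0)"
    by (rule sum.cong) auto
  then show ?case using Var by (simp add: LL_def sum.delta)
next
  case (Mul s t)
  then show ?case by (simp add: lr_mult LL_add)
qed

lemma deg_bound: "finite V \<Longrightarrow> (\<Sum>i\<in>V. ex t i) \<le> deg t"
proof (induction t)
  case (Var i)
  then show ?case by (simp add: sum.delta)
next
  case (Mul s t)
  then show ?case by (simp add: sum.distrib add_mono)
qed

lemma cmp_rat:
  fixes x y x' y' :: rat
  assumes "sgn x = sgn x'" "sgn y = sgn y'" "\<bar>x\<bar> < \<bar>y\<bar> \<longleftrightarrow> \<bar>x'\<bar> < \<bar>y'\<bar>"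
     "\<bar>y\<bar> < \<bar>x\<bar> \<longleftrightarrow> \<bar>y'\<bar> < \<bar>x'\<bar>"
  shows "(x = y \<longleftrightarrow> x' = y') \<and> (x < y \<longleftrightarrow> x' < y')"
  using assms by (auto simp: sgn_if abs_if split: if_splits)



lemma Inv_sgn: "Inv N M V e e' \<Longrightarrow> i \<in> V \<Longrightarrow> sgn (e i) = sgn (e' i)"
  unfolding Inv_def by (auto simp: sgn_if)

lemma Inv_tzero: "Inv N M V e e' \<Longrightarrow> ftm t \<subseteq> V \<Longrightarrow> tval e t = 0 \<longleftrightarrow> tval e' t = 0"
  unfolding Inv_def tval_zero by blast

lemma Inv_absless:
  assumes inv: "Inv N M V e e'" and sub: "ftm s \<union> ftm t \<subseteq> V" and dg: "deg s + deg t \<le> N"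
  shows "\<bar>tval e s\<bar> < \<bar>tval e t\<bar> \<longleftrightarrow> \<bar>tval e' s\<bar> < \<bar>tval e' t\<bar>"
proof -
  have fin: "finite V" using inv Inv_def by blast
  have zs: "tval e s = 0 \<longleftrightarrow> tval e' s = 0" using Inv_tzero[OF inv] sub by blast
  have zt: "tval e t = 0 \<longleftrightarrow> tval e' t = 0" using Inv_tzero[OF inv] sub by blast
  show ?thesis
  proof (cases "tval e s = 0 \<or> tval e t = 0")
    case True
    then show ?thesis using zs zt by auto
  next
    case False
    define c where "c = (\<lambda>i. 1 * int (ex s i) - 1 * int (ex t i))"
    have nc: "nrm V c \<le> int N"
    proof -
      have "nrm V c \<le> \<bar>1\<bar> * nrm V (\<lambda>i. int (ex s i)) + \<bar>1\<bar> * nrm V (\<lambda>i. int (ex t i))"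
        unfolding c_def by (rule nrm_lin)
      also have "\<dots> = int (\<Sum>i\<in>V. ex s i) + int (\<Sum>i\<in>V. ex t i)" by (simp add: nrm_def)
      also have "\<dots> \<le> int (deg s) + int (deg t)" using deg_bound[OF fin, of s] deg_bound[OF fin, of t] by (simp add: of_nat_sum[symmetric] del: of_nat_sum)
      finally show ?thesis using dg by simp
    qed
    have sg: "sgn (LL e V c) = sgn (LL e' V c)" using inv nc unfolding Inv_def by blast
    have "lr (tval e s) - lr (tval e t) = LL e V c"
      using tval_lr[OF fin, of s e] tval_lr[OF fin, of t e] False sub unfolding c_def LL_lin by simp
    moreover have "lr (tval e' s) - lr (tval e' t) = LL e' V c"
      using tval_lr[OF fin, of s e'] tval_lr[OF fin, of t e'] False zs zt sub unfolding c_def LL_lin by simp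
    ultimately have "lr (tval e s) < lr (tval e t) \<longleftrightarrow> lr (tval e' s) < lr (tval e' t)"
      using sg by (auto simp: sgn_if split: if_splits)
    then show ?thesis using False zs zt lr_less by metis
  qed
qed

lemma Inv_atom:
  assumes inv: "Inv N M V e e'" and sub: "ftm s \<union> ftm t \<subseteq> V" and dg: "deg s + deg t \<le> N"
  shows "(tval e s = tval e t \<longleftrightarrow> tval e' s = tval e' t) \<and> (tval e s < tval e t \<longleftrightarrow> tval e' s < tval e' t)"
proof (rule cmp_rat)
  show "sgn (tval e s) = sgn (tval e' s)" using tval_sgn Inv_sgn[OF inv] sub by blast
  show "sgn (tval e t) = sgn (tval e' t)" using tval_sgn Inv_sgn[OF inv] sub by blast
  show "\<bar>tval e s\<bar> < \<bar>tval e t\<bar> \<longleftrightarrow> \<bar>tval e' s\<bar> < \<bar>tval e' t\<bar>" by (rule Inv_absless[OF inv sub dg])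
  show "\<bar>tval e t\<bar> < \<bar>tval e s\<bar> \<longleftrightarrow> \<bar>tval e' t\<bar> < \<bar>tval e' s\<bar>"
    by (rule Inv_absless[OF inv]) (use sub dg in auto)
qed

lemma Inv_sym: "Inv N M V e e' \<Longrightarrow> Inv N M V e' e"
  unfolding Inv_def
proof (elim conjE, intro conjI)
  assume r: "\<forall>i\<in>V. e i \<noteq> 0 \<longrightarrow> (\<exists>u. 0 < u \<and> \<bar>e' i\<bar> = \<bar>e i\<bar> * u ^ M)"
    and p: "\<forall>i\<in>V. (e i = 0) = (e' i = 0) \<and> (0 < e i) = (0 < e' i)"
  show "\<forall>i\<in>V. e' i \<noteq> 0 \<longrightarrow> (\<exists>u. 0 < u \<and> \<bar>e i\<bar> = \<bar>e' i\<bar> * u ^ M)"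
  proof (intro ballI impI)
    fix i assume i: "i \<in> V" "e' i \<noteq> 0"
    then obtain u where u: "0 < u" "\<bar>e' i\<bar> = \<bar>e i\<bar> * u ^ M" using r p by blast
    show "\<exists>u. 0 < u \<and> \<bar>e i\<bar> = \<bar>e' i\<bar> * u ^ M"
      by (rule exI[of _ "inverse u"]) (use u in \<open>simp add: power_inverse\<close>)
  qed
qed auto

lemma Inv_mono:
  assumes inv: "Inv N M V e e'" and "W \<subseteq> V" "N' \<le> N"
  shows "Inv N' M W e e'"
proof -
  have fin: "finite V" using inv Inv_def by blast
  have fW: "finite W" using assms(2) fin finite_subset by blast
  have o: "\<forall>c. nrm V c \<le> int N \<longrightarrow> sgn (LL e V c) = sgn (LL e' V c)" using inv Inv_def by blast
  have "sgn (LL e W c) = sgn (LL e' W c)" if "nrm W c \<le> int N'" for c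
  proof -
    define c' where "c' = (\<lambda>i. if i \<in> W then c i else 0)"
    have "nrm V c' = nrm W c" unfolding nrm_def c'_def
      by (rule sum.mono_neutral_cong_right) (use fin assms(2) in auto)
    moreover have "LL e V c' = LL e W c" for e unfolding LL_def c'_def
      by (rule sum.mono_neutral_cong_right) (use fin assms(2) in auto)
    ultimately show ?thesis using o that assms(3) by (metis of_nat_le_iff order_trans)
  qed
  then show ?thesis using inv fW assms(2) unfolding Inv_def by blast
qed



definition ipow :: "rat \<Rightarrow> int \<Rightarrow> rat" where
  "ipow x k = (if 0 \<le> k then x ^ nat k else inverse x ^ nat (-k))"

lemma ipow_pos: "0 < x \<Longrightarrow> 0 < ipow x k"
  by (simp add: ipow_def)

lemma ln_ipow: "0 < x \<Longrightarrow> ln (real_of_rat (ipow x k)) = real_of_int k * ln (real_of_rat x)"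
  by (simp add: ipow_def of_rat_power of_rat_inverse ln_realpow ln_inverse)

lemma density:
  fixes lo hi A :: real
  assumes "lo < hi" "0 < M"
  shows "\<exists>g::rat. \<exists>k::int. 0 < g \<and> lo < A + real M * (real_of_int k * ln (real_of_rat g)) \<and>
            A + real M * (real_of_int k * ln (real_of_rat g)) < hi"
proof -
  obtain m :: nat where m: "real M / (hi - lo) < real m" using reals_Archimedean2 by blast
  have mpos: "0 < m" using m assms
    by (metis divide_pos_pos of_nat_0 of_nat_0_less_iff of_nat_less_0_iff diff_gt_0_iff_gt not_less_iff_gr_or_eq order_less_trans)
  define g :: rat where "g = 1 + 1 / of_nat m"
  have gr: "real_of_rat g = 1 + 1 / real m" by (simp add: g_def of_rat_add of_rat_divide)
  define \<delta> where "\<delta> = real M * ln (real_of_rat g)"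
  have lnpos: "0 < ln (real_of_rat g)" using gr mpos by (intro ln_gt_zero) simp
  have dpos: "0 < \<delta>" using lnpos assms unfolding \<delta>_def by simp
  have "ln (real_of_rat g) \<le> 1 / real m" using gr ln_add_one_self_le_self[of "1 / real m"] by simp
  then have "\<delta> \<le> real M / real m" unfolding \<delta>_def using mult_left_mono[of _ _ "real M"] by (simp add: divide_inverse)
  also have "\<dots> < hi - lo" using m assms mpos by (simp add: field_simps)
  finally have dl: "\<delta> < hi - lo" .
  define k where "k = \<lfloor>(lo - A) / \<delta>\<rfloor> + 1"
  have k1: "(lo - A) / \<delta> < real_of_int k" unfolding k_def by linarith
  have k2: "real_of_int k - 1 \<le> (lo - A) / \<delta>" unfolding k_def by linarith
  have "lo - A < real_of_int k * \<delta>" using k1 dpos by (simp add: divide_less_eq)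
  moreover have "(real_of_int k - 1) * \<delta> \<le> lo - A" using k2 dpos by (simp add: le_divide_eq)
  ultimately have "lo < A + real_of_int k * \<delta> \<and> A + real_of_int k * \<delta> < hi"
    using dl by (simp add: algebra_simps)
  moreover have "0 < g" unfolding g_def by (simp add: add_pos_nonneg)
  ultimately show ?thesis unfolding \<delta>_def by (metis mult.left_commute)
qed

lemma lohi:
  fixes A B :: "real set"
  assumes "finite A" "finite B" "\<forall>a\<in>A. \<forall>b\<in>B. a < b"
  shows "\<exists>lo hi. lo < hi \<and> (\<forall>a\<in>A. a \<le> lo) \<and> (\<forall>b\<in>B. hi \<le> b)"
proof (cases "A = {}")
  case True
  show ?thesis
  proof (cases "B = {}")
    case True
    then show ?thesis using \<open>A = {}\<close> by (intro exI[of _ 0] exI[of _ 1]) auto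
  next
    case False
    have "\<forall>b\<in>B. Min B \<le> b" using assms(2) by simp
    then show ?thesis using \<open>A = {}\<close>
      by (intro exI[of _ "Min B - 1"] exI[of _ "Min B"]) auto
  qed
next
  case False
  show ?thesis
  proof (cases "B = {}")
    case True
    then show ?thesis using False assms
      by (intro exI[of _ "Max A"] exI[of _ "Max A + 1"]) auto
  next
    case B: False
    then show ?thesis using False assms
      by (intro exI[of _ "Max A"] exI[of _ "Min B"]) auto
  qed
qed



lemma LL_ins: "finite V \<Longrightarrow> x \<notin> V \<Longrightarrow> LL (e(x:=a)) (insert x V) c = of_int (c x) * lr a + LL e V c"
  unfolding LL_def by (simp add: sum.insert) (rule sum.cong, auto)

lemma nrm_ins: "finite V \<Longrightarrow> x \<notin> V \<Longrightarrow> nrm (insert x V) c = \<bar>c x\<bar> + nrm V c"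
  unfolding nrm_def by simp

lemma finish:
  assumes inv: "Inv N M V e e'" and x: "x \<notin> V" and M': "0 < M'" and MM: "M = fact n * M'"
    and Nn: "n \<le> N"
    and zb: "a = 0 \<longleftrightarrow> b = 0" and pb: "0 < a \<longleftrightarrow> 0 < b"
    and rb: "a \<noteq> 0 \<Longrightarrow> \<exists>u. 0 < u \<and> \<bar>b\<bar> = \<bar>a\<bar> * u ^ M'"
    and ob: "\<And>c j. nrm V c + \<bar>j\<bar> \<le> int n \<Longrightarrow>
              sgn (of_int j * lr a + LL e V c) = sgn (of_int j * lr b + LL e' V c)"
  shows "Inv n M' (insert x V) (e(x:=a)) (e'(x:=b))"
proof -
  have fin: "finite V" using inv Inv_def by blast
  have pat: "\<forall>i\<in>V. (e i = 0 \<longleftrightarrow> e' i = 0) \<and> (0 < e i \<longleftrightarrow> 0 < e' i)" using inv Inv_def by blast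
  have rat: "\<forall>i\<in>V. e i \<noteq> 0 \<longrightarrow> (\<exists>u::rat. 0 < u \<and> \<bar>e' i\<bar> = \<bar>e i\<bar> * u ^ M)" using inv Inv_def by blast
  have rat': "\<forall>i\<in>insert x V. (e(x:=a)) i \<noteq> 0 \<longrightarrow> (\<exists>u::rat. 0 < u \<and> \<bar>(e'(x:=b)) i\<bar> = \<bar>(e(x:=a)) i\<bar> * u ^ M')"
  proof (intro ballI impI)
    fix i assume i: "i \<in> insert x V" "(e(x:=a)) i \<noteq> 0"
    show "\<exists>u::rat. 0 < u \<and> \<bar>(e'(x:=b)) i\<bar> = \<bar>(e(x:=a)) i\<bar> * u ^ M'"
    proof (cases "i = x")
      case True then show ?thesis using rb i by simp
    next
      case False
      then have iV: "i \<in> V" using i by simp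
      then obtain u where u: "0 < u" "\<bar>e' i\<bar> = \<bar>e i\<bar> * u ^ M" using rat i False by auto
      show ?thesis using u False MM
        by (intro exI[of _ "u ^ fact n"]) (simp add: power_mult)
    qed
  qed
  have ord: "\<forall>c. nrm (insert x V) c \<le> int n \<longrightarrow>
     sgn (LL (e(x:=a)) (insert x V) c) = sgn (LL (e'(x:=b)) (insert x V) c)"
    using ob by (simp add: LL_ins[OF fin x] nrm_ins[OF fin x] add.commute)
  show ?thesis unfolding Inv_def using fin M' pat zb pb ord rat' x by auto
qed

lemma ext_zero:
  assumes inv: "Inv N M V e e'" and x: "x \<notin> V" and M': "0 < M'" and MM: "M = fact n * M'"
    and Nn: "n \<le> N"
  shows "Inv n M' (insert x V) (e(x:=0)) (e'(x:=0))"
proof (rule finish[OF inv x M' MM Nn])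
  fix c and j :: int assume "nrm V c + \<bar>j\<bar> \<le> int n"
  then have "nrm V c \<le> int N" using Nn by simp
  then show "sgn (of_int j * lr 0 + LL e V c) = sgn (of_int j * lr 0 + LL e' V c)"
    using inv Inv_def by simp
qed auto



lemma ratio_fun:
  assumes inv: "Inv N M V e e'"
  obtains u where "\<forall>i\<in>V. 0 < u i \<and> lr (e' i) = lr (e i) + real M * ln (real_of_rat (u i))"
proof -
  have pat: "\<forall>i\<in>V. (e i = 0 \<longleftrightarrow> e' i = 0)" using inv Inv_def by blast
  have rat: "\<forall>i\<in>V. e i \<noteq> 0 \<longrightarrow> (\<exists>u::rat. 0 < u \<and> \<bar>e' i\<bar> = \<bar>e i\<bar> * u ^ M)" using inv Inv_def by blast
  have "\<forall>i\<in>V. \<exists>u. 0 < u \<and> lr (e' i) = lr (e i) + real M * ln (real_of_rat u)"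
  proof
    fix i assume i: "i \<in> V"
    show "\<exists>u. 0 < u \<and> lr (e' i) = lr (e i) + real M * ln (real_of_rat u)"
    proof (cases "e i = 0")
      case True
      have "e' i = 0" using pat i True by blast
      then show ?thesis using True by (intro exI[of _ 1]) simp
    next
      case False
      then obtain u where u: "0 < u" "\<bar>e' i\<bar> = \<bar>e i\<bar> * u ^ M" using rat i by blast
      have "lr (e' i) = lr (e i) + real M * ln (real_of_rat u)"
        unfolding lr_def u(2) using u(1) False
        by (simp add: of_rat_mult of_rat_power ln_mult ln_realpow)
      then show ?thesis using u by blast
    qed
  qed
  then show ?thesis using that by metis
qed

lemma LL_ratio:
  assumes "\<forall>i\<in>V. lr (e' i) = lr (e i) + real M * U i"
  shows "LL e' V c = LL e V c + real M * (\<Sum>i\<in>V. of_int (c i) * U i)"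
proof -
  have "LL e' V c = (\<Sum>i\<in>V. of_int (c i) * lr (e i) + real M * (of_int (c i) * U i))"
    unfolding LL_def using assms by (intro sum.cong) (auto simp: algebra_simps)
  then show ?thesis by (simp add: LL_def sum.distrib sum_distrib_left)
qed

lemma caseA:
  assumes inv: "Inv N M V e e'" and MM: "M = fact n * M'" and NN: "N = 2*n^2 + n"
    and a0: "a \<noteq> 0"
    and c0: "nrm V c0 + int j0 \<le> int n" "1 \<le> j0" "of_nat j0 * lr a + LL e V c0 = 0"
  shows "\<exists>\<beta>::rat. 0 < \<beta> \<and> (\<exists>u. 0 < u \<and> \<beta> = \<bar>a\<bar> * u ^ M') \<and>
     (\<forall>c j. nrm V c + \<bar>j\<bar> \<le> int n \<longrightarrow>
        sgn (of_int j * lr a + LL e V c) = sgn (of_int j * ln (real_of_rat \<beta>) + LL e' V c))"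
proof -
  have fin: "finite V" using inv Inv_def by blast
  have ord: "\<forall>c. nrm V c \<le> int N \<longrightarrow> sgn (LL e V c) = sgn (LL e' V c)" using inv Inv_def by blast
  obtain u where u: "\<forall>i\<in>V. 0 < u i \<and> lr (e' i) = lr (e i) + real M * ln (real_of_rat (u i))"
    using ratio_fun[OF inv] by blast
  define U where "U i = ln (real_of_rat (u i))" for i
  have LLr: "LL e' V c = LL e V c + real M * (\<Sum>i\<in>V. of_int (c i) * U i)" for c
    by (rule LL_ratio) (use u U_def in auto)
  define W where "W = (\<Prod>i\<in>V. ipow (u i) (- c0 i))"
  have Wpos: "0 < W" unfolding W_def using u by (auto intro!: prod_pos ipow_pos)
  have lnW: "ln (real_of_rat W) = - (\<Sum>i\<in>V. of_int (c0 i) * U i)"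
  proof -
    have "ln (real_of_rat W) = (\<Sum>i\<in>V. ln (real_of_rat (ipow (u i) (- c0 i))))"
    proof -
      have "\<forall>i\<in>V. 0 < ipow (u i) (- c0 i)" using u ipow_pos by auto
      then show ?thesis unfolding W_def of_rat_prod using fin
        by (subst ln_prod) auto
    qed
    also have "\<dots> = (\<Sum>i\<in>V. - (of_int (c0 i) * U i))"
      using u by (intro sum.cong) (auto simp: ln_ipow U_def)
    finally show ?thesis by (simp add: sum_negf)
  qed
  define q where "q = fact n div j0"
  have jq: "j0 * q = fact n" unfolding q_def using dvd_fact[of j0 n] c0 nrm_nonneg[of V c0] by simp
  define \<beta> where "\<beta> = \<bar>a\<bar> * (W ^ q) ^ M'"
  have bpos: "0 < \<beta>" unfolding \<beta>_def using a0 Wpos by simp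
  have lnb: "ln (real_of_rat \<beta>) = lr a - real M' * real q * (\<Sum>i\<in>V. of_int (c0 i) * U i)"
    unfolding \<beta>_def lr_def using a0 Wpos
    by (simp add: of_rat_mult of_rat_power ln_mult ln_realpow lnW)
  have key0: "of_nat j0 * ln (real_of_rat \<beta>) + LL e' V c0 = 0"
  proof -
    have "real M = real j0 * real q * real M'" using MM jq by (metis of_nat_mult)
    then show ?thesis using c0(3) unfolding lnb LLr by (simp add: algebra_simps)
  qed
  have "sgn (of_int j * lr a + LL e V c) = sgn (of_int j * ln (real_of_rat \<beta>) + LL e' V c)"
    if cj: "nrm V c + \<bar>j\<bar> \<le> int n" for c j
  proof -
    define d where "d = (\<lambda>i. int j0 * c i - j * c0 i)"
    have nd: "nrm V d \<le> int N"
    proof -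
      have "nrm V d \<le> \<bar>int j0\<bar> * nrm V c + \<bar>j\<bar> * nrm V c0" unfolding d_def by (rule nrm_lin)
      also have "\<dots> \<le> int n * nrm V c + \<bar>j\<bar> * int n"
        using c0 nrm_nonneg[of V c] nrm_nonneg[of V c0]
        by (intro add_mono mult_right_mono mult_left_mono) auto
      also have "\<dots> = int n * (nrm V c + \<bar>j\<bar>)" by (simp add: algebra_simps)
      also have "\<dots> \<le> int n * int n" using cj by (intro mult_left_mono) auto
      finally have "nrm V d \<le> int n * int n" .
      moreover have "int n * int n \<le> int N" using NN by (simp add: power2_eq_square)
      ultimately show ?thesis by linarith
    qed
    have h1: "LL e V c0 = - (of_nat j0 * lr a)" using c0(3) by linarith
    have h2: "LL e' V c0 = - (of_nat j0 * ln (real_of_rat \<beta>))" using key0 by linarith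
    have e1: "LL e V d = of_nat j0 * (of_int j * lr a + LL e V c)"
      unfolding d_def LL_lin h1 by (simp add: algebra_simps)
    have e2: "LL e' V d = of_nat j0 * (of_int j * ln (real_of_rat \<beta>) + LL e' V c)"
      unfolding d_def LL_lin h2 by (simp add: algebra_simps)
    have "sgn (LL e V d) = sgn (LL e' V d)" using ord nd by blast
    then show ?thesis unfolding e1 e2 using c0(2) by (simp add: sgn_mult)
  qed
  moreover have "\<beta> = \<bar>a\<bar> * (W ^ q) ^ M' \<and> 0 < W ^ q" unfolding \<beta>_def using Wpos by simp
  ultimately show ?thesis using bpos by blast
qed

lemma caseB:
  assumes inv: "Inv N M V e e'" and MM: "M = fact n * M'" and NN: "N = 2*n^2 + n"
    and a0: "a \<noteq> 0" and M': "0 < M'"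
    and noA: "\<And>c0 j0. nrm V c0 + int j0 \<le> int n \<Longrightarrow> 1 \<le> j0 \<Longrightarrow> of_nat j0 * lr a + LL e V c0 \<noteq> 0"
  shows "\<exists>\<beta>::rat. 0 < \<beta> \<and> (\<exists>u. 0 < u \<and> \<beta> = \<bar>a\<bar> * u ^ M') \<and>
     (\<forall>c j. nrm V c + \<bar>j\<bar> \<le> int n \<longrightarrow>
        sgn (of_int j * lr a + LL e V c) = sgn (of_int j * ln (real_of_rat \<beta>) + LL e' V c))"
proof -
  have fin: "finite V" using inv Inv_def by blast
  have ord: "\<forall>c. nrm V c \<le> int N \<longrightarrow> sgn (LL e V c) = sgn (LL e' V c)" using inv Inv_def by blast
  define S where "S = {(c, j). c \<in> V \<rightarrow>\<^sub>E {-int n..int n} \<and> j \<in> {1..n} \<and> nrm V c + int j \<le> int n}"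
  have finS: "finite S"
  proof (rule finite_subset)
    show "S \<subseteq> (V \<rightarrow>\<^sub>E {-int n..int n}) \<times> {1..n}" unfolding S_def by auto
    show "finite ((V \<rightarrow>\<^sub>E {-int n..int n}) \<times> {1..n})" using fin by (simp add: finite_PiE)
  qed
  define f where "f p = of_nat (snd p) * lr a + LL e V (fst p)" for p
  define r where "r p = - LL e' V (fst p) / of_nat (snd p)" for p
  define Lo where "Lo = {p\<in>S. f p > 0}"
  define Up where "Up = {p\<in>S. f p < 0}"
  have pair: "r p < r q" if p: "p \<in> Lo" and q: "q \<in> Up" for p q
  proof -
    obtain cL jL where pe: "p = (cL, jL)" by (cases p)
    obtain cU jU where qe: "q = (cU, jU)" by (cases q)
    have L: "nrm V cL + int jL \<le> int n" "1 \<le> jL" "of_nat jL * lr a + LL e V cL > 0"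
      using p unfolding pe Lo_def S_def f_def by auto
    have U: "nrm V cU + int jU \<le> int n" "1 \<le> jU" "of_nat jU * lr a + LL e V cU < 0"
      using q unfolding qe Up_def S_def f_def by auto
    define d where "d = (\<lambda>i. int jU * cL i - int jL * cU i)"
    have nd: "nrm V d \<le> int N"
    proof -
      have "nrm V d \<le> \<bar>int jU\<bar> * nrm V cL + \<bar>int jL\<bar> * nrm V cU" unfolding d_def by (rule nrm_lin)
      also have "\<dots> \<le> int n * int n + int n * int n"
        using L U nrm_nonneg[of V cL] nrm_nonneg[of V cU]
        by (intro add_mono mult_mono) auto
      finally have "nrm V d \<le> int n * int n + int n * int n" .
      moreover have "int n * int n + int n * int n \<le> int N" using NN by (simp add: power2_eq_square)
      ultimately show ?thesis by linarith
    qed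
    have "of_nat jU * (of_nat jL * lr a + LL e V cL) > 0" using L U by simp
    moreover have "of_nat jL * (of_nat jU * lr a + LL e V cU) < 0" using L U
      by (simp add: mult_pos_neg)
    ultimately have "LL e V d > 0" unfolding d_def LL_lin by (simp add: algebra_simps)
    then have "sgn (LL e V d) = 1" by simp
    then have "sgn (LL e' V d) = 1" using ord nd by metis
    then have g: "of_nat jU * LL e' V cL - of_nat jL * LL e' V cU > 0"
      unfolding d_def LL_lin by (simp add: sgn_if split: if_splits)
    show ?thesis unfolding pe qe r_def using L U g by (simp add: field_simps)
  qed
  obtain lo0 hi0 where lh: "lo0 < hi0" "\<forall>x\<in>r ` Lo. x \<le> lo0" "\<forall>x\<in>r ` Up. hi0 \<le> x"
  proof -
    have f1: "finite (r ` Lo)" "finite (r ` Up)" using finS unfolding Lo_def Up_def by auto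
    have f2: "\<forall>x\<in>r ` Lo. \<forall>y\<in>r ` Up. x < y" using pair by blast
    from lohi[OF f1 f2] obtain lo hi where "lo < hi" "\<forall>x\<in>r ` Lo. x \<le> lo" "\<forall>x\<in>r ` Up. hi \<le> x"
      by blast
    then show ?thesis by (rule that)
  qed
  obtain g :: rat and k :: int where gk: "0 < g"
    "lo0 < lr a + real M' * (real_of_int k * ln (real_of_rat g))"
    "lr a + real M' * (real_of_int k * ln (real_of_rat g)) < hi0"
    using density[OF lh(1) M', of "lr a"] by blast
  define \<beta> where "\<beta> = \<bar>a\<bar> * (ipow g k) ^ M'"
  have gp: "0 < ipow g k" using gk ipow_pos by blast
  have bpos: "0 < \<beta>" unfolding \<beta>_def using a0 gp by simp
  define z where "z = ln (real_of_rat \<beta>)"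
  have zv: "z = lr a + real M' * (real_of_int k * ln (real_of_rat g))"
    unfolding z_def \<beta>_def lr_def using a0 gp gk
    by (simp add: of_rat_mult of_rat_power ln_mult ln_realpow ln_ipow)
  have G: "sgn (of_nat j * lr a + LL e V c) = sgn (of_nat j * z + LL e' V c)"
    if cj: "nrm V c + int j \<le> int n" "1 \<le> j" for c j
  proof -
    define c' where "c' = restrict c V"
    have nc: "nrm V c' = nrm V c" unfolding c'_def nrm_def by (rule sum.cong) auto
    have lc: "LL e V c' = LL e V c" for e unfolding c'_def LL_def by (rule sum.cong) auto
    have "c' \<in> V \<rightarrow>\<^sub>E {-int n..int n}"
    proof -
      have "\<bar>c i\<bar> \<le> int n" if "i \<in> V" for i using nrm_le[OF fin that, of c] cj by linarith
      then have "\<forall>i\<in>V. - int n \<le> c i \<and> c i \<le> int n" by (force simp: abs_le_iff)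
      then show ?thesis unfolding c'_def by auto
    qed
    then have pS: "(c', j) \<in> S" unfolding S_def using cj nc nrm_nonneg[of V c] by auto
    have fne: "f (c', j) \<noteq> 0" unfolding f_def using noA[of c' j] cj nc lc by simp
    show ?thesis
    proof (cases "f (c', j) > 0")
      case True
      then have "(c', j) \<in> Lo" using pS Lo_def by auto
      then have "r (c', j) \<le> lo0" using lh(2) by blast
      then have "r (c', j) < z" using gk zv by linarith
      then have "- LL e' V c / of_nat j < z" unfolding r_def by (simp add: lc)
      then have "of_nat j * z + LL e' V c > 0" using cj by (simp add: field_simps)
      moreover have "of_nat j * lr a + LL e V c > 0" using True unfolding f_def by (simp add: lc)
      ultimately show ?thesis by simp
    next
      case False
      then have "f (c', j) < 0" using fne by simp
      then have fl: "(c', j) \<in> Up" using pS Up_def by auto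
      then have "hi0 \<le> r (c', j)" using lh(3) by blast
      then have "z < r (c', j)" using gk zv by linarith
      then have "z < - LL e' V c / of_nat j" unfolding r_def by (simp add: lc)
      then have "of_nat j * z + LL e' V c < 0" using cj by (simp add: field_simps)
      moreover have "of_nat j * lr a + LL e V c < 0" using \<open>f (c', j) < 0\<close> unfolding f_def by (simp add: lc)
      ultimately show ?thesis by simp
    qed
  qed
  have "sgn (of_int j * lr a + LL e V c) = sgn (of_int j * z + LL e' V c)"
    if cj: "nrm V c + \<bar>j\<bar> \<le> int n" for c j
  proof (cases j "0::int" rule: linorder_cases)
    case equal
    then have "nrm V c \<le> int N" using cj NN by (simp add: power2_eq_square) (smt (verit) mult_nonneg_nonneg of_nat_0_le_iff)
    then show ?thesis using ord equal by simp
  next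
    case greater
    then show ?thesis using G[of c "nat j"] cj by simp
  next
    case less
    have "sgn (of_nat (nat (-j)) * lr a + LL e V (\<lambda>i. - c i)) = sgn (of_nat (nat (-j)) * z + LL e' V (\<lambda>i. - c i))"
      using G[of "\<lambda>i. - c i" "nat (-j)"] cj less by (simp add: nrm_neg)
    moreover have "of_nat (nat (-j)) = - (of_int j :: real)" using less by simp
    ultimately have "sgn (- (of_int j * lr a + LL e V c)) = sgn (- (of_int j * z + LL e' V c))"
      by (simp add: LL_neg algebra_simps)
    then show ?thesis by (metis sgn_minus minus_minus)
  qed
  moreover have "\<beta> = \<bar>a\<bar> * (ipow g k) ^ M' \<and> 0 < ipow g k" unfolding \<beta>_def using gp by simp
  ultimately show ?thesis using bpos unfolding z_def by blast
qed



lemma ext: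
  assumes inv: "Inv (2*n^2+n) (fact n * M') V e e'" and x: "x \<notin> V" and M': "0 < M'"
  shows "\<exists>b. Inv n M' (insert x V) (e(x:=a)) (e'(x:=b))"
proof (cases "a = 0")
  case True
  then show ?thesis using ext_zero[OF inv x M' refl] by auto
next
  case a0: False
  have "\<exists>\<beta>::rat. 0 < \<beta> \<and> (\<exists>u. 0 < u \<and> \<beta> = \<bar>a\<bar> * u ^ M') \<and>
     (\<forall>c j. nrm V c + \<bar>j\<bar> \<le> int n \<longrightarrow>
        sgn (of_int j * lr a + LL e V c) = sgn (of_int j * ln (real_of_rat \<beta>) + LL e' V c))"
  proof (cases "\<exists>c0 j0. nrm V c0 + int j0 \<le> int n \<and> 1 \<le> j0 \<and> of_nat j0 * lr a + LL e V c0 = 0")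
    case True
    then obtain c0 j0 where "nrm V c0 + int j0 \<le> int n" "1 \<le> j0" "of_nat j0 * lr a + LL e V c0 = 0"
      by blast
    then show ?thesis using caseA[OF inv refl refl a0] by blast
  next
    case False
    then show ?thesis using caseB[OF inv refl refl a0 M'] by blast
  qed
  then obtain \<beta> :: rat where b: "0 < \<beta>" "\<exists>u. 0 < u \<and> \<beta> = \<bar>a\<bar> * u ^ M'"
    "\<forall>c j. nrm V c + \<bar>j\<bar> \<le> int n \<longrightarrow>
        sgn (of_int j * lr a + LL e V c) = sgn (of_int j * ln (real_of_rat \<beta>) + LL e' V c)"
    by blast
  define b where "b = (if 0 < a then \<beta> else - \<beta>)"
  have ab: "\<bar>b\<bar> = \<beta>" unfolding b_def using b by auto
  have lb: "lr b = ln (real_of_rat \<beta>)" unfolding lr_def ab ..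
  have "Inv n M' (insert x V) (e(x:=a)) (e'(x:=b))"
  proof (rule finish[OF inv x M' refl])
    show "n \<le> 2 * n\<^sup>2 + n" by simp
    show "(a = 0) = (b = 0)" using a0 b unfolding b_def by auto
    show "(0 < a) = (0 < b)" using a0 b unfolding b_def by auto
    show "\<exists>u. 0 < u \<and> \<bar>b\<bar> = \<bar>a\<bar> * u ^ M'" using b ab by simp
    show "sgn (of_int j * lr a + LL e V c) = sgn (of_int j * lr b + LL e' V c)"
      if "nrm V c + \<bar>j\<bar> \<le> int n" for c j using b that lb by simp
  qed
  then show ?thesis by blast
qed

fun qd :: "fm \<Rightarrow> nat" where
  "qd (Not p) = qd p"
| "qd (And p q) = max (qd p) (qd q)"
| "qd (Or p q) = max (qd p) (qd q)"
| "qd (Imp p q) = max (qd p) (qd q)"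
| "qd (Ex x p) = Suc (qd p)"
| "qd (All x p) = Suc (qd p)"
| "qd _ = 0"

fun md :: "fm \<Rightarrow> nat" where
  "md (Eq s t) = deg s + deg t"
| "md (Less s t) = deg s + deg t"
| "md (Not p) = md p"
| "md (And p q) = max (md p) (md q)"
| "md (Or p q) = max (md p) (md q)"
| "md (Imp p q) = max (md p) (md q)"
| "md (Ex x p) = md p"
| "md (All x p) = md p"
| "md _ = 0"

fun FF :: "nat \<Rightarrow> nat \<Rightarrow> nat" where
  "FF 0 D = D"
| "FF (Suc k) D = 2 * (FF k D)^2 + FF k D"

fun GG :: "nat \<Rightarrow> nat \<Rightarrow> nat" where
  "GG 0 D = 1"
| "GG (Suc k) D = fact (FF k D) * GG k D"

lemma FF_ge: "D \<le> FF k D"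
  by (induction k) auto

lemma GG_pos: "0 < GG k D"
  by (induction k) auto

lemma step:
  assumes inv: "Inv (FF (Suc k) D) (GG (Suc k) D) V e e'"
  shows "\<exists>b. Inv (FF k D) (GG k D) (insert x (V - {x})) (e(x:=a)) (e'(x:=b))"
proof -
  have "Inv (FF (Suc k) D) (GG (Suc k) D) (V - {x}) e e'" by (rule Inv_mono[OF inv]) auto
  then show ?thesis using ext[of "FF k D" "GG k D" "V - {x}" e e' x a] GG_pos by simp
qed

lemma main:
  "md \<phi> \<le> D \<Longrightarrow> qd \<phi> \<le> k \<Longrightarrow> fv \<phi> \<subseteq> V \<Longrightarrow> Inv (FF k D) (GG k D) V e e' \<Longrightarrow> sat e \<phi> = sat e' \<phi>"
proof (induction \<phi> arbitrary: k V e e')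
  case (Eq s t)
  have "deg s + deg t \<le> FF k D" using Eq FF_ge[of D k] by simp
  then show ?case using Inv_atom[OF Eq(4)] Eq by simp
next
  case (Less s t)
  have "deg s + deg t \<le> FF k D" using Less FF_ge[of D k] by simp
  then show ?case using Inv_atom[OF Less(4)] Less by simp
next
  case (Ex x p)
  then obtain k' where k: "k = Suc k'" by (cases k) auto
  have qp: "qd p \<le> k'" "md p \<le> D" "fv p \<subseteq> insert x (V - {x})" using Ex k by auto
  have inv: "Inv (FF (Suc k') D) (GG (Suc k') D) V e e'" using Ex k by simp
  have inv': "Inv (FF (Suc k') D) (GG (Suc k') D) V e' e" using Inv_sym[OF inv] .
  show ?case
  proof
    assume "sat e (fm.Ex x p)"
    then obtain a where "sat (e(x:=a)) p" by auto
    moreover obtain b where "Inv (FF k' D) (GG k' D) (insert x (V - {x})) (e(x:=a)) (e'(x:=b))"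
      using step[OF inv] by blast
    ultimately show "sat e' (fm.Ex x p)" using Ex.IH[OF qp(2,1,3)] by auto
  next
    assume "sat e' (fm.Ex x p)"
    then obtain a where "sat (e'(x:=a)) p" by auto
    moreover obtain b where "Inv (FF k' D) (GG k' D) (insert x (V - {x})) (e'(x:=a)) (e(x:=b))"
      using step[OF inv'] by blast
    ultimately show "sat e (fm.Ex x p)" using Ex.IH[OF qp(2,1,3)] Inv_sym by fastforce
  qed
next
  case (All x p)
  then obtain k' where k: "k = Suc k'" by (cases k) auto
  have qp: "qd p \<le> k'" "md p \<le> D" "fv p \<subseteq> insert x (V - {x})" using All k by auto
  have inv: "Inv (FF (Suc k') D) (GG (Suc k') D) V e e'" using All k by simp
  have inv': "Inv (FF (Suc k') D) (GG (Suc k') D) V e' e" using Inv_sym[OF inv] .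
  show ?case
  proof
    assume h: "sat e (fm.All x p)"
    show "sat e' (fm.All x p)"
    proof (simp, intro allI)
      fix a
      obtain b where "Inv (FF k' D) (GG k' D) (insert x (V - {x})) (e'(x:=a)) (e(x:=b))"
        using step[OF inv'] by blast
      moreover have "sat (e(x:=b)) p" using h by simp
      ultimately show "sat (e'(x:=a)) p" using All.IH[OF qp(2,1,3)] Inv_sym by fastforce
    qed
  next
    assume h: "sat e' (fm.All x p)"
    show "sat e (fm.All x p)"
    proof (simp, intro allI)
      fix a
      obtain b where "Inv (FF k' D) (GG k' D) (insert x (V - {x})) (e(x:=a)) (e'(x:=b))"
        using step[OF inv] by blast
      moreover have "sat (e'(x:=b)) p" using h by simp
      ultimately show "sat (e(x:=a)) p" using All.IH[OF qp(2,1,3)] by fastforce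
    qed
  qed
qed auto

lemma base_inv:
  assumes M: "0 < M"
  shows "Inv N M {0,1,2} ((\<lambda>_. 0)(0 := 1, 1 := 1, 2 := 2)) ((\<lambda>_. 0)(0 := 1, 1 := 1, 2 := 2 * 2 ^ M))"
proof -
  let ?e = "(\<lambda>_::nat. 0::rat)(0 := 1, 1 := 1, 2 := 2)"
  let ?e' = "(\<lambda>_::nat. 0::rat)(0 := 1, 1 := 1, 2 := 2 * 2 ^ M)"
  have l1: "LL ?e {0,1,2} c = of_int (c 2) * lr 2" for c by (simp add: LL_def lr_def)
  have l2: "LL ?e' {0,1,2} c = of_int (c 2) * (real (Suc M) * lr 2)" for c
  proof -
    have "lr (2 * 2 ^ M) = real (Suc M) * lr 2"
      by (simp add: lr_def of_rat_mult of_rat_power ln_mult ln_realpow algebra_simps)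
    then show ?thesis by (simp add: LL_def lr_def)
  qed
  have lp: "0 < lr 2" by (simp add: lr_def)
  have o: "sgn (LL ?e {0,1,2} c) = sgn (LL ?e' {0,1,2} c)" for c
    unfolding l1 l2 using lp by (simp add: sgn_mult)
  have r: "\<forall>i\<in>{0,1,2}. ?e i \<noteq> 0 \<longrightarrow> (\<exists>u::rat. 0 < u \<and> \<bar>?e' i\<bar> = \<bar>?e i\<bar> * u ^ M)"
  proof -
    have "\<exists>u::rat. 0 < u \<and> \<bar>2 * 2 ^ M\<bar> = \<bar>2\<bar> * u ^ M" by (intro exI[of _ 2]) simp
    moreover have "\<exists>u::rat. 0 < u \<and> \<bar>1\<bar> = \<bar>1\<bar> * u ^ M" by (intro exI[of _ 1]) simp
    ultimately show ?thesis by auto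
  qed
  show ?thesis unfolding Inv_def using M o r by simp
qed

theorem corollary1:
  shows "\<not> (\<exists>\<phi>. fv \<phi> \<subseteq> {0, 1, 2} \<and>
            (\<forall>a b c :: rat. sat ((\<lambda>_. 0)(0 := a, 1 := b, 2 := c)) \<phi> \<longleftrightarrow> c = a + b))"
proof
  assume "\<exists>\<phi>. fv \<phi> \<subseteq> {0, 1, 2} \<and>
            (\<forall>a b c :: rat. sat ((\<lambda>_. 0)(0 := a, 1 := b, 2 := c)) \<phi> \<longleftrightarrow> c = a + b)"
  then obtain \<phi> where fv: "fv \<phi> \<subseteq> {0, 1, 2}" and h:
    "\<forall>a b c :: rat. sat ((\<lambda>_. 0)(0 := a, 1 := b, 2 := c)) \<phi> \<longleftrightarrow> c = a + b" by blast
  define M where "M = GG (qd \<phi>) (md \<phi>)"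
  have M: "0 < M" unfolding M_def by (rule GG_pos)
  have inv: "Inv (FF (qd \<phi>) (md \<phi>)) (GG (qd \<phi>) (md \<phi>)) {0,1,2}
     ((\<lambda>_. 0)(0 := 1, 1 := 1, 2 := 2)) ((\<lambda>_. 0)(0 := 1, 1 := 1, 2 := 2 * 2 ^ M))"
    using base_inv[OF M] unfolding M_def .
  have eq: "sat ((\<lambda>_. 0)(0 := 1, 1 := 1, 2 := 2)) \<phi> = sat ((\<lambda>_. 0)(0 := 1, 1 := 1, 2 := 2 * 2 ^ M)) \<phi>"
    by (rule main[OF order.refl order.refl fv inv])
  have "sat ((\<lambda>_. 0)(0 := 1, 1 := 1, 2 := 2)) \<phi>" using h by simp
  moreover have "\<not> sat ((\<lambda>_. 0)(0 := 1, 1 := 1, 2 := (2::rat) * 2 ^ M)) \<phi>"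
  proof -
    have "(1::rat) < 2 ^ M" using M by (intro one_less_power) auto
    then have "(2::rat) ^ M \<noteq> 1" by simp
    then have "(2::rat) * 2 ^ M \<noteq> 1 + 1" by simp
    then show ?thesis using h by simp
  qed
  ultimately show False using eq by simp
qed

end
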